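(* Let $p,q$ be positive integers with $\gcd(p,q)=1$, $p$ odd and $p/(2q)-1\in(-1,1)$. Then \[ \mathcal{O}(p/2q)=\Big\{\pm A\Big(\frac{(2\ell+1)^2}{4q^2}\Big):\ \ell\in\{0,1,\dots,q-1\}\Big\} \] and \[ \mathcal{E}(p/2q)=\{\pm A(\ell^2/q^2):\ \ell\in\{0,1,\dots,q-1\}\}. \]
   Context: Nodes: $x_{k,n}:=2k/n-1$, $k=0,\dots,n$; $D_n(x)=\sum_{k=0}^n(-1)^k\frac{1}{x-x_{k,n}}$. $A(y)=\sum_{k=0}^\infty(-1)^k\frac{4k+2}{(2k+1)^2-y}$ for $y\in[0,1)$. A sequence $n_j$ is a strictly increasing map $\mathbb{N}\to\mathbb{N}$, odd (even) if all $n_j$ are odd (even); $x$ is regular for $n_j$ if there is $j_0$ with $x\notin\{x_{0,n_j},\dots,x_{n_j,n_j}\}$ for $j\ge j_0$. For a rational $r$ with $x=r-1\in(-1,1)$, $\mathcal{O}(r)$ is the set of $L\in\overline{\mathbb{R}}=\mathbb{R}\cup\{\pm\infty\}$ such that $\lim_{j\to\infty}D_{n_j}(x)/n_j=L$ for some odd sequence $n_j$ for which $x$ is regular; $\mathcal{E}(r)$ is defined likewise with even sequences. Here $p/2q$ means $p/(2q)$. *)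

theory Defs
  imports "HOL-Analysis.Analysis"
begin

definition node :: "nat \<Rightarrow> nat \<Rightarrow> real" where
  "node k n = 2 * real k / real n - 1"

definition D :: "nat \<Rightarrow> real \<Rightarrow> real" where
  "D n x = (\<Sum>k = 0..n. (-1) ^ k / (x - node k n))"

definition A :: "real \<Rightarrow> real" where
  "A y = (\<Sum>k. (-1) ^ k * (4 * real k + 2) / ((2 * real k + 1)^2 - y))"

definition odd_seq :: "(nat \<Rightarrow> nat) \<Rightarrow> bool" where
  "odd_seq ns \<longleftrightarrow> strict_mono ns \<and> (\<forall>j. odd (ns j))"

definition even_seq :: "(nat \<Rightarrow> nat) \<Rightarrow> bool" where
  "even_seq ns \<longleftrightarrow> strict_mono ns \<and> (\<forall>j. even (ns j))"

definition regular :: "real \<Rightarrow> (nat \<Rightarrow> nat) \<Rightarrow> bool" where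
  "regular x ns \<longleftrightarrow> (\<exists>j0. \<forall>j\<ge>j0. x \<notin> {node k (ns j) | k. k \<le> ns j})"

definition Oset :: "real \<Rightarrow> ereal set" where
  "Oset r = {L. \<exists>ns. odd_seq ns \<and> regular (r - 1) ns \<and>
      ((\<lambda>j. ereal (D (ns j) (r - 1) / real (ns j))) \<longlongrightarrow> L) sequentially}"

definition Eset :: "real \<Rightarrow> ereal set" where
  "Eset r = {L. \<exists>ns. even_seq ns \<and> regular (r - 1) ns \<and>
      ((\<lambda>j. ereal (D (ns j) (r - 1) / real (ns j))) \<longlongrightarrow> L) sequentially}"

end

theory Submission
  imports Defs "HOL-Real_Asymp.Real_Asymp" "HOL-Number_Theory.Cong"
begin


lemma alt_part:
  fixes c :: real assumes c: "c > 0"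
  shows "summable (\<lambda>k. (-1)^k * (1 / (c + real k)))"
    and "(\<lambda>n. \<Sum>k<n. (-1)^k * (1 / (c + real k))) \<longlonglongrightarrow> (\<Sum>k. (-1)^k * (1 / (c + real k)))"
proof -
  have z: "(\<lambda>k. 1 / (c + real k)) \<longlonglongrightarrow> 0"
    by real_asymp
  have s: "summable (\<lambda>k. (-1)^k * (1 / (c + real k)))"
    by (rule summable_Leibniz'(1)[OF z]) (use c in \<open>auto simp: frac_le\<close>)
  show "summable (\<lambda>k. (-1)^k * (1 / (c + real k)))" by (fact s)
  show "(\<lambda>n. \<Sum>k<n. (-1)^k * (1 / (c + real k))) \<longlonglongrightarrow> (\<Sum>k. (-1)^k * (1 / (c + real k)))"
    using summable_LIMSEQ[OF s] by simp
qed

lemma A_eq: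
  fixes t :: real assumes "0 < t" "t < 1"
  shows "A ((1 - 2*t)^2) = ((\<Sum>k. (-1)^k * (1 / (t + real k))) + (\<Sum>k. (-1)^k * (1 / ((1-t) + real k)))) / 2"
proof -
  have s1: "(\<lambda>k. (-1)^k * (1 / (t + real k))) sums (\<Sum>k. (-1)^k * (1 / (t + real k)))"
    using alt_part(1)[of t] assms by (simp add: summable_sums)
  have s2: "(\<lambda>k. (-1)^k * (1 / ((1-t) + real k))) sums (\<Sum>k. (-1)^k * (1 / ((1-t) + real k)))"
    using alt_part(1)[of "1-t"] assms by (simp add: summable_sums)
  note s3 = sums_divide[OF sums_add[OF s1 s2], of 2]
  have eq: "((-1)^k * (1 / (t + real k)) + (-1)^k * (1 / ((1-t) + real k))) / 2
        = (-1) ^ k * (4 * real k + 2) / ((2 * real k + 1)^2 - (1 - 2*t)^2)" for k :: nat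
  proof -
    have "t + real k > 0" "1 - t + real k > 0" using assms by auto
    moreover have e: "(2 * real k + 1)^2 - (1 - 2*t)^2 = 4 * (t + real k) * (1 - t + real k)"
      by (simp add: power2_eq_square algebra_simps)
    moreover have g: "((s::real) * (1 / a) + s * (1 / b)) / 2 = s * (4 * real k + 2) / (4 * a * b)"
      if "a > 0" "b > 0" "a + b = 2 * real k + 1" for a b s
    proof -
      have "4 * real k + 2 = 2 * (a + b)" using that(3) by simp
      then show ?thesis using that(1,2) by (simp add: field_simps)
    qed
    ultimately show ?thesis unfolding e by (intro g) auto
  qed
  show ?thesis unfolding A_def using sums_unique[OF s3[unfolded eq]] by simp
qed
lemma neg1_pow_diff: "i \<le> k \<Longrightarrow> (-1::real)^(k - i) = (-1)^k * (-1)^i"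
proof -
  assume "i \<le> k"
  then obtain d where k: "k = i + d" using le_Suc_ex by blast
  have "(-1::real)^i * (-1)^i = 1" by (simp add: power_mult_distrib[symmetric])
  then show ?thesis unfolding k by (simp add: power_add algebra_simps)
qed

lemma sum_split_rev:
  fixes f :: "nat \<Rightarrow> real" and k0 n :: nat
  assumes "k0 \<le> n"
  shows "(\<Sum>k = 0..n. f k) = (\<Sum>i\<le>k0. f (k0 - i)) + (\<Sum>i<n - k0. f (Suc k0 + i))"
proof -
  obtain d where n: "n = k0 + d" using assms le_Suc_ex by blast
  have "(\<Sum>k = 0..n. f k) = (\<Sum>k\<le>k0 + d. f k)" unfolding n by (simp add: atLeast0AtMost)
  also have "\<dots> = (\<Sum>k\<le>k0. f k) + (\<Sum>k = Suc k0..k0 + d. f k)" by (rule sum_up_index_split)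
  also have "(\<Sum>k\<le>k0. f k) = (\<Sum>i\<le>k0. f (k0 - i))"
    using sum.nat_diff_reindex[of "\<lambda>i. f i" "Suc k0"] by (simp add: lessThan_Suc_atMost)
  also have "(\<Sum>k = Suc k0..k0 + d. f k) = (\<Sum>i<d. f (Suc k0 + i))"
  proof -
    have "{Suc k0..k0 + d} = {0 + Suc k0..<d + Suc k0}" by auto
    then show ?thesis using sum.shift_bounds_nat_ivl[of f 0 "Suc k0" d]
      by (simp add: atLeast0LessThan add.commute)
  qed
  finally show ?thesis unfolding n by simp
qed

lemma D_ident:
  fixes p q n :: nat
  assumes q: "0 < q" and pq: "p < 4*q" and n: "0 < n" and r: "n*p mod (4*q) \<noteq> 0"
  defines "k0 \<equiv> n*p div (4*q)" and "t \<equiv> real (n*p mod (4*q)) / real (4*q)"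
  shows "D n (real p/(2*real q) - 1) / real n =
     (-1)^k0 * ((\<Sum>k\<le>k0. (-1)^k*(1/(t+real k))) + (\<Sum>k<n-k0. (-1)^k*(1/((1-t)+real k)))) / 2"
proof -
  define m where "m = real (n*p) / real (4*q)"
  have mk: "m = real k0 + t"
  proof -
    have "n*p = k0 * (4*q) + n*p mod (4*q)" unfolding k0_def by (rule div_mult_mod_eq[symmetric])
    then have "real (n*p) = real k0 * real (4*q) + real (n*p mod (4*q))" by (metis of_nat_add of_nat_mult)
    then show ?thesis unfolding m_def t_def using q by (simp add: field_simps)
  qed
  have k0n: "k0 \<le> n"
  proof -
    have "n*p \<le> n*(4*q)" using pq by simp
    then have "n*p div (4*q) \<le> n*(4*q) div (4*q)" by (rule div_le_mono)
    then show ?thesis unfolding k0_def using q by simp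
  qed
  have t1: "t < 1"
  proof -
    have "n*p mod (4*q) < 4*q" using q by simp
    then have "real (n*p mod (4*q)) < real (4*q)" by linarith
    then show ?thesis unfolding t_def using q by simp
  qed
  define f where "f k = (-1::real)^k / (m - real k)" for k
  have tm: "(-1)^k / (real p/(2*real q) - 1 - node k n) = real n / 2 * f k" for k
  proof -
    have "real p/(2*real q) - 1 - node k n = (2 / real n) * (m - real k)"
      unfolding node_def m_def using q n by (simp add: field_simps)
    then show ?thesis unfolding f_def by simp
  qed
  have "D n (real p/(2*real q) - 1) = real n / 2 * (\<Sum>k = 0..n. f k)"
    unfolding D_def tm by (simp add: sum_distrib_left)
  also have "(\<Sum>k = 0..n. f k) = (\<Sum>i\<le>k0. f (k0 - i)) + (\<Sum>i<n - k0. f (Suc k0 + i))"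
    by (rule sum_split_rev[OF k0n])
  also have "(\<Sum>i\<le>k0. f (k0 - i)) = (-1)^k0 * (\<Sum>k\<le>k0. (-1)^k*(1/(t+real k)))"
    unfolding sum_distrib_left
  proof (rule sum.cong[OF refl])
    fix i assume "i \<in> {..k0}"
    then have "i \<le> k0" by simp
    then show "f (k0 - i) = (-1)^k0 * ((-1)^i*(1/(t+real i)))"
      unfolding f_def mk using neg1_pow_diff[of i k0] by (simp add: of_nat_diff)
  qed
  also have "(\<Sum>i<n - k0. f (Suc k0 + i)) = (-1)^k0 * (\<Sum>k<n-k0. (-1)^k*(1/((1-t)+real k)))"
    unfolding sum_distrib_left
  proof (rule sum.cong[OF refl])
    fix i
    have e: "m - real (Suc k0 + i) = - ((1-t) + real i)" unfolding mk by simp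
    show "f (Suc k0 + i) = (-1)^k0 * ((-1)^i*(1/((1-t)+real i)))"
    proof -
      have "1 - t + real i > 0" using t1 by simp
      then show ?thesis unfolding f_def e by (simp add: power_add field_simps)
    qed
  qed
  finally show ?thesis using n by (simp add: field_simps)
qed


lemma filterlim_lin:
  fixes f :: "nat \<Rightarrow> nat"
  assumes "\<And>j. j \<le> f j * K + C"
  shows "filterlim f at_top sequentially"
  unfolding filterlim_at_top eventually_sequentially
proof (intro allI exI allI impI)
  fix Z j assume j: "Z * K + C + Z \<le> j"
  show "Z \<le> f j"
  proof (rule ccontr)
    assume a: "\<not> Z \<le> f j"
    then have "f j * K \<le> Z * K" by simp
    then show False using assms[of j] j a by linarith
  qed
qed

lemma partial_le_tendsto:
  fixes g :: "nat \<Rightarrow> real" and b :: "nat \<Rightarrow> nat"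
  assumes "(\<lambda>N. \<Sum>k<N. g k) \<longlonglongrightarrow> l" and "filterlim b at_top sequentially"
  shows "(\<lambda>j. \<Sum>k\<le>b j. g k) \<longlonglongrightarrow> l"
proof -
  have "filterlim (\<lambda>j. Suc (b j)) at_top sequentially"
    using filterlim_compose[OF filterlim_Suc assms(2)] by simp
  from filterlim_compose[OF assms(1) this] show ?thesis by (simp add: lessThan_Suc_atMost)
qed

lemma partial_lt_tendsto:
  fixes g :: "nat \<Rightarrow> real" and b :: "nat \<Rightarrow> nat"
  assumes "(\<lambda>N. \<Sum>k<N. g k) \<longlonglongrightarrow> l" and "filterlim b at_top sequentially"
  shows "(\<lambda>j. \<Sum>k<b j. g k) \<longlonglongrightarrow> l"
  using filterlim_compose[OF assms(1) assms(2)] by simp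

definition V :: "nat \<Rightarrow> nat \<Rightarrow> nat \<Rightarrow> real" where
  "V p q n = (-1)^(n*p div (4*q)) * A ((1 - 2 * (real (n*p mod (4*q)) / real (4*q)))^2)"

lemma cls_mod:
  fixes n c p q :: nat
  assumes "n mod (8*q) = c mod (8*q)"
  shows "n*p mod (4*q) = c*p mod (4*q)" and "even (n*p div (4*q)) = even (c*p div (4*q))"
proof -
  have "n*p mod (8*q) = (n mod (8*q))*p mod (8*q)" by (rule mod_mult_left_eq[symmetric])
  also have "\<dots> = (c mod (8*q))*p mod (8*q)" using assms by simp
  also have "\<dots> = c*p mod (8*q)" by (rule mod_mult_left_eq)
  finally have e: "n*p mod (8*q) = c*p mod (8*q)" .
  have qq: "8*q = (4*q)*2" by simp
  have e8: "n*p mod ((4*q)*2) = c*p mod ((4*q)*2)" using e unfolding qq .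
  have dv: "4*q dvd (4*q)*2" by simp
  show e4: "n*p mod (4*q) = c*p mod (4*q)"
    using e8 mod_mod_cancel[OF dv, of "n*p"] mod_mod_cancel[OF dv, of "c*p"] by simp
  have "4*q*((n*p) div (4*q) mod 2) + n*p mod (4*q) = 4*q*((c*p) div (4*q) mod 2) + c*p mod (4*q)"
    using e8 mod_mult2_eq[of "n*p" "4*q" 2] mod_mult2_eq[of "c*p" "4*q" 2] by simp
  then have "4*q*((n*p) div (4*q) mod 2) = 4*q*((c*p) div (4*q) mod 2)" using e4 by simp
  then have "q = 0 \<or> (n*p) div (4*q) mod 2 = (c*p) div (4*q) mod 2" by auto
  then show "even (n*p div (4*q)) = even (c*p div (4*q))"
    by (auto simp: even_iff_mod_2_eq_zero)
qed

lemma neg1_parity: "even a = even b \<Longrightarrow> (-1::real)^a = (-1)^b"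
  by (cases "even a") (auto simp: neg_one_even_power neg_one_odd_power)

lemma Conv:
  fixes p q c :: nat and ns :: "nat \<Rightarrow> nat"
  assumes q: "0 < q" and p: "0 < p" and pq: "p < 4*q" and sm: "strict_mono ns"
    and cls: "\<And>j. ns j mod (8*q) = c mod (8*q)" and r: "c*p mod (4*q) \<noteq> 0"
  shows "(\<lambda>j. D (ns j) (real p/(2*real q) - 1) / real (ns j)) \<longlonglongrightarrow> V p q c"
proof -
  define t where "t = real (c*p mod (4*q)) / real (4*q)"
  define k0 where "k0 = c*p div (4*q)"
  define b where "b j = ns j * p div (4*q)" for j
  define a where "a j = ns j - b j" for j
  define g1 where "g1 k = (-1)^k * (1 / (t + real k))" for k
  define g2 where "g2 k = (-1)^k * (1 / ((1-t) + real k))" for k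
  have t0: "0 < t" unfolding t_def using r q by simp
  have t1: "t < 1"
  proof -
    have "c*p mod (4*q) < 4*q" using q by simp
    then have "real (c*p mod (4*q)) < real (4*q)" by linarith
    then show ?thesis unfolding t_def using q by simp
  qed
  have eqj: "D (ns j) (real p/(2*real q) - 1) / real (ns j) = (-1)^k0 * (((\<Sum>k\<le>b j. g1 k) + (\<Sum>k<a j. g2 k)) / 2)" for j
  proof -
    have m1: "ns j * p mod (4*q) = c*p mod (4*q)" and m2: "even (ns j * p div (4*q)) = even (c*p div (4*q))"
      using cls_mod[OF cls[of j]] by auto
    have nz: "ns j * p mod (4*q) \<noteq> 0" using m1 r by simp
    then have "ns j \<noteq> 0" by (cases "ns j") auto
    then have n0: "0 < ns j" by simp
    have "D (ns j) (real p/(2*real q) - 1) / real (ns j) = (-1)^(b j) * ((\<Sum>k\<le>b j. (-1)^k*(1/(t+real k))) + (\<Sum>k<ns j - b j. (-1)^k*(1/((1-t)+real k)))) / 2"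
      using D_ident[OF q pq n0 nz] unfolding b_def t_def m1 .
    also have "(-1::real)^(b j) = (-1)^k0" unfolding b_def k0_def by (rule neg1_parity[OF m2])
    finally show ?thesis unfolding a_def g1_def g2_def by simp
  qed
  have fb: "filterlim b at_top sequentially"
  proof (rule filterlim_lin[where K="4*q" and C="4*q"])
    fix j
    have "j \<le> ns j" using sm by (rule strict_mono_imp_increasing)
    also have "\<dots> \<le> ns j * p" using p by simp
    also have "\<dots> = b j * (4*q) + ns j * p mod (4*q)" unfolding b_def by (rule div_mult_mod_eq[symmetric])
    also have "\<dots> \<le> b j * (4*q) + 4*q" using q by simp
    finally show "j \<le> b j * (4*q) + 4*q" .
  qed
  have fa: "filterlim a at_top sequentially"
  proof (rule filterlim_lin[where K="4*q" and C="0"])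
    fix j
    have "j \<le> ns j" using sm by (rule strict_mono_imp_increasing)
    have h1: "b j * (4*q) \<le> ns j * p" unfolding b_def by (rule div_times_less_eq_dividend)
    have "ns j * (p + 1) \<le> ns j * (4*q)" using pq by (intro mult_le_mono2) simp
    then have h2: "b j * (4*q) + ns j \<le> ns j * (4*q)" using h1 by (simp add: algebra_simps)
    have h3: "a j * (4*q) = ns j * (4*q) - b j * (4*q)" unfolding a_def by (simp add: diff_mult_distrib)
    show "j \<le> a j * (4*q) + 0" using h2 h3 \<open>j \<le> ns j\<close> by linarith
  qed
  have l1: "(\<lambda>j. \<Sum>k\<le>b j. g1 k) \<longlonglongrightarrow> (\<Sum>k. g1 k)"
    by (rule partial_le_tendsto[OF _ fb]) (unfold g1_def, rule alt_part(2), use t0 in simp)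
  have l2: "(\<lambda>j. \<Sum>k<a j. g2 k) \<longlonglongrightarrow> (\<Sum>k. g2 k)"
    by (rule partial_lt_tendsto[OF _ fa]) (unfold g2_def, rule alt_part(2), use t1 in simp)
  have "(\<lambda>j. (-1)^k0 * (((\<Sum>k\<le>b j. g1 k) + (\<Sum>k<a j. g2 k)) / 2)) \<longlonglongrightarrow> (-1)^k0 * (((\<Sum>k. g1 k) + (\<Sum>k. g2 k)) / 2)"
    by (intro tendsto_intros l1 l2) simp
  also have "(-1)^k0 * (((\<Sum>k. g1 k) + (\<Sum>k. g2 k)) / 2) = V p q c"
    unfolding V_def g1_def g2_def k0_def using A_eq[OF t0 t1] unfolding t_def by simp
  finally show ?thesis unfolding eqj .
qed



lemma node_iff:
  fixes p q n :: nat
  assumes q: "0 < q" and pq: "p < 4*q" and n: "0 < n"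
  shows "(real p/(2*real q) - 1 \<in> {node k n | k. k \<le> n}) \<longleftrightarrow> n*p mod (4*q) = 0"
proof
  assume "real p/(2*real q) - 1 \<in> {node k n | k. k \<le> n}"
  then obtain k where "real p/(2*real q) - 1 = 2 * real k / real n - 1" unfolding node_def by auto
  then have "real p/(2*real q) = 2 * real k / real n" by simp
  then have "real p * real n = real (4*q) * real k" using q n by (simp add: field_simps)
  then have "p * n = 4*q*k" by (metis of_nat_mult of_nat_eq_iff)
  then show "n*p mod (4*q) = 0" by (simp add: mult.commute)
next
  assume h: "n*p mod (4*q) = 0"
  define k where "k = n*p div (4*q)"
  have e: "n*p = 4*q*k" unfolding k_def using h by (metis div_mult_mod_eq add_0_right mult.commute)
  have "k \<le> n"
  proof -
    have "n*p \<le> n*(4*q)" using pq by simp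
    then have "n*p div (4*q) \<le> n*(4*q) div (4*q)" by (rule div_le_mono)
    then show ?thesis unfolding k_def using q by simp
  qed
  moreover have "real p/(2*real q) - 1 = node k n"
  proof -
    have "real n * real p = 4 * real q * real k" using e by (metis of_nat_mult of_nat_numeral)
    then show ?thesis unfolding node_def using q n by (simp add: field_simps)
  qed
  ultimately show "real p/(2*real q) - 1 \<in> {node k n | k. k \<le> n}" by blast
qed

lemma limit_in:
  fixes p q :: nat and ns :: "nat \<Rightarrow> nat" and L :: ereal
  assumes q: "0 < q" and p: "0 < p" and pq: "p < 4*q" and sm: "strict_mono ns"
    and reg: "regular (real p/(2*real q) - 1) ns"
    and lim: "((\<lambda>j. ereal (D (ns j) (real p/(2*real q) - 1) / real (ns j))) \<longlongrightarrow> L) sequentially"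
  shows "\<exists>j. L = ereal (V p q (ns j)) \<and> ns j * p mod (4*q) \<noteq> 0"
proof -
  obtain j0 where j0: "\<And>j. j \<ge> j0 \<Longrightarrow> real p/(2*real q) - 1 \<notin> {node k (ns j) | k. k \<le> ns j}"
    using reg unfolding regular_def by blast
  have fin: "finite ((\<lambda>j. ns j mod (8*q)) ` UNIV)"
    by (rule finite_subset[of _ "{..<8*q}"]) (use q in auto)
  obtain a0 where inf: "infinite {j. ns j mod (8*q) = ns a0 mod (8*q)}"
    using pigeonhole_infinite[OF infinite_UNIV_nat fin] by auto
  define S where "S = {j. ns j mod (8*q) = ns a0 mod (8*q)}"
  have infS: "infinite S" using inf unfolding S_def .
  then obtain j1 where j1: "j1 \<ge> j0 + 1" "j1 \<in> S" unfolding infinite_nat_iff_unbounded_le by blast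
  have "ns j1 \<ge> j1" using sm by (rule strict_mono_imp_increasing)
  then have n1: "0 < ns j1" using j1 by simp
  have "j0 \<le> j1" using j1 by simp
  then have "ns j1 * p mod (4*q) \<noteq> 0" using j0[of j1] node_iff[OF q pq n1] by blast
  moreover have "ns j1 * p mod (4*q) = ns a0 * p mod (4*q)" using cls_mod(1) j1(2) unfolding S_def by blast
  ultimately have r: "ns a0 * p mod (4*q) \<noteq> 0" by simp
  define rr where "rr = enumerate S"
  have smr: "strict_mono rr" unfolding rr_def by (intro strict_monoI enumerate_mono infS)
  have rrS: "rr j \<in> S" for j unfolding rr_def by (rule enumerate_in_set[OF infS])
  have conv: "(\<lambda>j. D ((ns \<circ> rr) j) (real p/(2*real q) - 1) / real ((ns \<circ> rr) j)) \<longlonglongrightarrow> V p q (ns a0)"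
    by (rule Conv[OF q p pq strict_mono_o[OF sm smr] _ r]) (use rrS in \<open>auto simp: S_def\<close>)
  have l1: "(\<lambda>j. ereal (D ((ns \<circ> rr) j) (real p/(2*real q) - 1) / real ((ns \<circ> rr) j))) \<longlonglongrightarrow> ereal (V p q (ns a0))"
    using conv by (rule tendsto_ereal)
  have l2: "(\<lambda>j. ereal (D ((ns \<circ> rr) j) (real p/(2*real q) - 1) / real ((ns \<circ> rr) j))) \<longlonglongrightarrow> L"
    using LIMSEQ_subseq_LIMSEQ[OF lim smr] by (simp add: o_def)
  have "L = ereal (V p q (ns a0))" using LIMSEQ_unique[OF l2 l1] .
  then show ?thesis using r by blast
qed

lemma limit_reach:
  fixes p q c :: nat
  assumes q: "0 < q" and p: "0 < p" and pq: "p < 4*q" and r: "c*p mod (4*q) \<noteq> 0"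
  defines "ns \<equiv> (\<lambda>j. c + 8*q*j)"
  shows "strict_mono ns" and "regular (real p/(2*real q) - 1) ns"
    and "((\<lambda>j. ereal (D (ns j) (real p/(2*real q) - 1) / real (ns j))) \<longlongrightarrow> ereal (V p q c)) sequentially"
proof -
  show sm: "strict_mono ns" unfolding ns_def using q by (intro strict_monoI) simp
  have cls: "ns j mod (8*q) = c mod (8*q)" for j unfolding ns_def by simp
  have c0: "c \<noteq> 0" using r by (cases c) auto
  show "regular (real p/(2*real q) - 1) ns" unfolding regular_def
  proof (intro exI allI impI)
    fix j :: nat
    have n0: "0 < ns j" unfolding ns_def using c0 by simp
    have "ns j * p mod (4*q) \<noteq> 0" using cls_mod(1)[OF cls[of j]] r by simp
    then show "real p/(2*real q) - 1 \<notin> {node k (ns j) | k. k \<le> ns j}" using node_iff[OF q pq n0] by simp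
  qed
  show "((\<lambda>j. ereal (D (ns j) (real p/(2*real q) - 1) / real (ns j))) \<longlongrightarrow> ereal (V p q c)) sequentially"
    by (rule tendsto_ereal, rule Conv[OF q p pq sm cls r])
qed

lemma V_odd:
  fixes p q c :: nat
  assumes q: "0 < q" and od: "odd (c*p mod (4*q))"
  shows "\<exists>l<q. V p q c = A ((2 * real l + 1)^2 / (4 * (real q)^2))
                \<or> V p q c = - A ((2 * real l + 1)^2 / (4 * (real q)^2))"
proof -
  define s where "s = c*p mod (4*q)"
  have s4: "s < 4*q" unfolding s_def using q by simp
  have os: "odd s" using od unfolding s_def .
  obtain l where l: "l < q" and le: "(2 * real l + 1)^2 = (2 * real q - real s)^2"
  proof (cases "s < 2*q")
    case True
    then have "odd (2*q - s)" using os by simp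
    then obtain l where l: "2*q - s = 2*l + 1" by (rule oddE)
    have "l < q" using l True by simp
    moreover have "2 * real l + 1 = 2 * real q - real s" using l True
      by (metis of_nat_add of_nat_mult of_nat_1 of_nat_numeral of_nat_diff less_imp_le)
    ultimately show ?thesis using that by simp
  next
    case False
    then have "odd (s - 2*q)" using os by simp
    then obtain l where l: "s - 2*q = 2*l + 1" by (rule oddE)
    have "l < q" using l False s4 by simp
    moreover have "2 * real l + 1 = real s - 2 * real q" using l False
      by (metis of_nat_add of_nat_mult of_nat_1 of_nat_numeral of_nat_diff not_less)
    moreover have "(real s - 2 * real q)^2 = (2 * real q - real s)^2" by (simp add: power2_commute)
    ultimately show ?thesis using that by simp
  qed
  have arg: "(1 - 2 * (real s / real (4*q)))^2 = (2 * real l + 1)^2 / (4 * (real q)^2)"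
    unfolding le using q by (simp add: field_simps power2_eq_square)
  show ?thesis
  proof (intro exI[of _ l] conjI l)
    show "V p q c = A ((2 * real l + 1)^2 / (4 * (real q)^2)) \<or> V p q c = - A ((2 * real l + 1)^2 / (4 * (real q)^2))"
      unfolding V_def s_def[symmetric] arg
      by (cases "even (c * p div (4 * q))") (auto simp: neg_one_even_power neg_one_odd_power)
  qed
qed

lemma V_even:
  fixes p q c :: nat
  assumes q: "0 < q" and ev: "even (c*p mod (4*q))" and nz: "c*p mod (4*q) \<noteq> 0"
  shows "\<exists>l<q. V p q c = A ((real l)^2 / (real q)^2)
                \<or> V p q c = - A ((real l)^2 / (real q)^2)"
proof -
  define s where "s = c*p mod (4*q)"
  have s4: "s < 4*q" unfolding s_def using q by simp
  obtain w where hs: "s = 2*w" using ev unfolding s_def by (rule evenE)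
  have "s \<noteq> 0" using nz unfolding s_def .
  then have hs0: "w > 0" "w < 2*q" using s4 unfolding hs by auto
  obtain l where l: "l < q" and le: "(real l)^2 = (real q - real w)^2"
  proof (cases "w < q")
    case True
    have "q - w < q" using True hs0 by simp
    moreover have "real (q - w) = real q - real w" using True by simp
    ultimately show ?thesis using that[of "q - w"] by simp
  next
    case False
    have "w - q < q" using False hs0 by simp
    moreover have "real (w - q) = real w - real q" using False by simp
    moreover have "(real w - real q)^2 = (real q - real w)^2" by (simp add: power2_commute)
    ultimately show ?thesis using that[of "w - q"] by simp
  qed
  have arg: "(1 - 2 * (real s / real (4*q)))^2 = (real l)^2 / (real q)^2"
    unfolding le hs using q by (simp add: field_simps power2_eq_square)
  show ?thesis
  proof (intro exI[of _ l] conjI l)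
    show "V p q c = A ((real l)^2 / (real q)^2) \<or> V p q c = - A ((real l)^2 / (real q)^2)"
      unfolding V_def s_def[symmetric] arg
      by (cases "even (c * p div (4 * q))") (auto simp: neg_one_even_power neg_one_odd_power)
  qed
qed

lemma flip:
  fixes p q c0 s :: nat
  assumes q: "0 < q" and op: "odd p" and c0: "c0*p mod (4*q) = s"
  shows "\<exists>c. (c = c0 \<or> c = c0 + 4*q) \<and> c*p mod (4*q) = s \<and> even (c*p div (4*q)) = e"
proof -
  have m: "(c0 + 4*q)*p mod (4*q) = s" using c0 by (simp add: algebra_simps)
  have d: "(c0 + 4*q)*p div (4*q) = c0*p div (4*q) + p"
  proof -
    have "(c0 + 4*q)*p = c0*p + p*(4*q)" by (simp add: algebra_simps)
    then show ?thesis using q by simp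
  qed
  show ?thesis
  proof (cases "even (c0*p div (4*q)) = e")
    case True then show ?thesis using c0 by blast
  next
    case False
    then have "even ((c0 + 4*q)*p div (4*q)) = e" unfolding d using op by auto
    then show ?thesis using m by blast
  qed
qed

lemma inverse_ex:
  fixes p q :: nat
  assumes q: "0 < q" and op: "odd p" and cp: "coprime p q"
  obtains u where "(u*p) mod (4*q) = 1" and "odd u"
proof -
  have "coprime p 2" using op by simp
  then have "coprime p (2^2)" using coprime_power_right_iff[of p 2 2] by blast
  moreover have e4: "(4::nat) = 2^2" by simp
  ultimately have "coprime p 4" by (subst e4) assumption
  then have "coprime p (4*q)" using cp by simp
  then obtain u where "[p*u = Suc 0] (mod (4*q))" using cong_solve_coprime_nat by blast
  then have e: "(u*p) mod (4*q) = 1" using q by (simp add: cong_def mult.commute)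
  have "u*p = 4*q*(u*p div (4*q)) + 1" using e by (metis div_mult_mod_eq mult.commute)
  then have "odd (u*p)" by (metis even_add even_mult_iff odd_one even_numeral)
  then have "odd u" by simp
  then show ?thesis using that e by blast
qed

lemma even_mod4q: "even ((a::nat) mod (4*q)) = even a"
proof -
  have "(2::nat) dvd 4*q" by simp
  then have "a mod (4*q) mod 2 = a mod 2" by (rule mod_mod_cancel)
  then show ?thesis by (simp add: even_iff_mod_2_eq_zero)
qed



theorem corollary5:
  fixes p q :: nat
  assumes "p > 0" and "q > 0" and "coprime p q" and "odd p"
    and "-1 < real p / (2 * real q) - 1" and "real p / (2 * real q) - 1 < 1"
  shows "Oset (real p / (2 * real q)) =
           {L. \<exists>l<q. L = ereal (A ((2 * real l + 1)^2 / (4 * (real q)^2)))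
                    \<or> L = ereal (- A ((2 * real l + 1)^2 / (4 * (real q)^2)))}
       \<and> Eset (real p / (2 * real q)) =
           {L. \<exists>l<q. L = ereal (A ((real l)^2 / (real q)^2))
                    \<or> L = ereal (- A ((real l)^2 / (real q)^2))}"
proof -
  note p = assms(1) and q = assms(2) and cp = assms(3) and op = assms(4)
  have pq: "p < 4*q"
  proof -
    have "real p / (2 * real q) < 2" using assms(6) by simp
    then have "real p < 4 * real q" using q by (simp add: field_simps)
    then show ?thesis by linarith
  qed
  obtain u where u: "(u*p) mod (4*q) = 1" and ou: "odd u" using inverse_ex[OF q op cp] .
  have solve: "u*w*p mod (4*q) = w" if "w < 4*q" for w :: nat
  proof -
    have "u*w*p mod (4*q) = (w * (u*p)) mod (4*q)" by (simp add: algebra_simps)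
    also have "\<dots> = (w * ((u*p) mod (4*q))) mod (4*q)" by (simp add: mod_mult_right_eq)
    also have "\<dots> = w" using u that by simp
    finally show ?thesis .
  qed
  have O: "Oset (real p / (2 * real q)) =
           {L. \<exists>l<q. L = ereal (A ((2 * real l + 1)^2 / (4 * (real q)^2)))
                    \<or> L = ereal (- A ((2 * real l + 1)^2 / (4 * (real q)^2)))}"
  proof (intro equalityI subsetI)
    fix L assume "L \<in> Oset (real p / (2 * real q))"
    then obtain ns where os: "odd_seq ns" and reg: "regular (real p / (2 * real q) - 1) ns"
      and lim: "((\<lambda>j. ereal (D (ns j) (real p / (2 * real q) - 1) / real (ns j))) \<longlongrightarrow> L) sequentially"
      unfolding Oset_def by blast
    have sm: "strict_mono ns" and on: "\<And>j. odd (ns j)" using os unfolding odd_seq_def by auto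
    obtain j where Lj: "L = ereal (V p q (ns j))" using limit_in[OF q p pq sm reg lim] by blast
    have "odd (ns j * p mod (4*q))" using on[of j] op by (simp add: even_mod4q)
    then obtain l where "l < q" and "V p q (ns j) = A ((2 * real l + 1)^2 / (4 * (real q)^2))
                \<or> V p q (ns j) = - A ((2 * real l + 1)^2 / (4 * (real q)^2))" using V_odd[OF q] by blast
    then show "L \<in> {L. \<exists>l<q. L = ereal (A ((2 * real l + 1)^2 / (4 * (real q)^2)))
                    \<or> L = ereal (- A ((2 * real l + 1)^2 / (4 * (real q)^2)))}" using Lj by auto
  next
    fix L assume "L \<in> {L. \<exists>l<q. L = ereal (A ((2 * real l + 1)^2 / (4 * (real q)^2)))
                    \<or> L = ereal (- A ((2 * real l + 1)^2 / (4 * (real q)^2)))}"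
    then obtain l where l: "l < q" and L: "L = ereal (A ((2 * real l + 1)^2 / (4 * (real q)^2)))
                    \<or> L = ereal (- A ((2 * real l + 1)^2 / (4 * (real q)^2)))" by blast
    define s where "s = 2*q - 2*l - 1"
    have s4: "s < 4*q" and os: "odd s" and sl: "s + 2*l + 1 = 2*q" unfolding s_def using l by auto
    define e where "e = (L = ereal (A ((2 * real l + 1)^2 / (4 * (real q)^2))))"
    obtain c where c: "c = u * s \<or> c = u * s + 4*q" and cm: "c*p mod (4*q) = s" and ce: "even (c*p div (4*q)) = e"
      using flip[OF q op solve[OF s4], of e] by blast
    have oc: "odd c" using c ou os by auto
    have r: "c*p mod (4*q) \<noteq> 0" using cm os by (metis odd_pos less_not_refl2)
    note R = limit_reach[OF q p pq r]
    have arg: "(1 - 2 * (real s / real (4*q)))^2 = (2 * real l + 1)^2 / (4 * (real q)^2)"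
    proof -
      have "real s + 2 * real l + 1 = 2 * real q" using sl by (metis of_nat_add of_nat_mult of_nat_numeral of_nat_1)
      then have rs: "real s = 2 * real q - 2 * real l - 1" by simp
      show ?thesis unfolding rs using q by (simp add: field_simps power2_eq_square)
    qed
    have VL: "ereal (V p q c) = L"
      unfolding V_def cm arg using L ce unfolding e_def
      by (cases "even (c * p div (4 * q))") (auto simp: neg_one_even_power neg_one_odd_power)
    have "odd_seq (\<lambda>j. c + 8*q*j)" unfolding odd_seq_def using R(1) oc by simp
    then show "L \<in> Oset (real p / (2 * real q))" unfolding Oset_def using R(2) R(3) VL by auto
  qed
  have E: "Eset (real p / (2 * real q)) =
           {L. \<exists>l<q. L = ereal (A ((real l)^2 / (real q)^2))
                    \<or> L = ereal (- A ((real l)^2 / (real q)^2))}"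
  proof (intro equalityI subsetI)
    fix L assume "L \<in> Eset (real p / (2 * real q))"
    then obtain ns where es: "even_seq ns" and reg: "regular (real p / (2 * real q) - 1) ns"
      and lim: "((\<lambda>j. ereal (D (ns j) (real p / (2 * real q) - 1) / real (ns j))) \<longlongrightarrow> L) sequentially"
      unfolding Eset_def by blast
    have sm: "strict_mono ns" and en: "\<And>j. even (ns j)" using es unfolding even_seq_def by auto
    obtain j where Lj: "L = ereal (V p q (ns j))" and nz: "ns j * p mod (4*q) \<noteq> 0"
      using limit_in[OF q p pq sm reg lim] by blast
    have "even (ns j * p mod (4*q))" using en[of j] by (simp add: even_mod4q)
    then obtain l where "l < q" and "V p q (ns j) = A ((real l)^2 / (real q)^2)
                \<or> V p q (ns j) = - A ((real l)^2 / (real q)^2)" using V_even[OF q _ nz] by blast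
    then show "L \<in> {L. \<exists>l<q. L = ereal (A ((real l)^2 / (real q)^2))
                    \<or> L = ereal (- A ((real l)^2 / (real q)^2))}" using Lj by auto
  next
    fix L assume "L \<in> {L. \<exists>l<q. L = ereal (A ((real l)^2 / (real q)^2))
                    \<or> L = ereal (- A ((real l)^2 / (real q)^2))}"
    then obtain l where l: "l < q" and L: "L = ereal (A ((real l)^2 / (real q)^2))
                    \<or> L = ereal (- A ((real l)^2 / (real q)^2))" by blast
    define s where "s = 2*(q - l)"
    have s4: "s < 4*q" and es: "even s" and s0: "s \<noteq> 0" unfolding s_def using l by auto
    define e where "e = (L = ereal (A ((real l)^2 / (real q)^2)))"
    obtain c where c: "c = u * s \<or> c = u * s + 4*q" and cm: "c*p mod (4*q) = s" and ce: "even (c*p div (4*q)) = e"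
      using flip[OF q op solve[OF s4], of e] by blast
    have ec: "even c" using c es by auto
    have r: "c*p mod (4*q) \<noteq> 0" using cm s0 by auto
    note R = limit_reach[OF q p pq r]
    have arg: "(1 - 2 * (real s / real (4*q)))^2 = (real l)^2 / (real q)^2"
    proof -
      have rs: "real s = 2 * (real q - real l)" unfolding s_def using l by simp
      show ?thesis unfolding rs using q by (simp add: field_simps power2_eq_square)
    qed
    have VL: "ereal (V p q c) = L"
      unfolding V_def cm arg using L ce unfolding e_def
      by (cases "even (c * p div (4 * q))") (auto simp: neg_one_even_power neg_one_odd_power)
    have "even_seq (\<lambda>j. c + 8*q*j)" unfolding even_seq_def using R(1) ec by simp
    then show "L \<in> Eset (real p / (2 * real q))" unfolding Eset_def using R(2) R(3) VL by auto
  qed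
  show ?thesis using O E by blast
qed


end
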